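(* Let $\Gamma$ be a finitely generated group that contains an infinite acentral subgroup $A$ of infinite index in $\Gamma$. Then $\Gamma$ is not presentable by a product.
   Context: A subgroup $A$ of a group $\Gamma$ is called acentral if for every $g\in A\setminus\{1\}$ the centraliser $C_\Gamma(g)$ is contained in $A$. An infinite group $\Gamma$ is not presentable by a product if for every homomorphism $\varphi\colon \Gamma_1\times\Gamma_2\to\Gamma$ whose image has finite index in $\Gamma$, at least one of the images $\varphi(\Gamma_1)$, $\varphi(\Gamma_2)$ is finite; an infinite group is presentable by a product if it is not "not presentable by a product". *)

theory Defs
  imports "HOL-Algebra.Algebra"
begin

definition centraliser :: "('a, 'm) monoid_scheme \<Rightarrow> 'a \<Rightarrow> 'a set" where
  "centraliser G g = {h \<in> carrier G. h \<otimes>\<^bsub>G\<^esub> g = g \<otimes>\<^bsub>G\<^esub> h}"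

definition acentral :: "('a, 'm) monoid_scheme \<Rightarrow> 'a set \<Rightarrow> bool" where
  "acentral G A \<longleftrightarrow> subgroup A G \<and>
     (\<forall>g \<in> A - {\<one>\<^bsub>G\<^esub>}. centraliser G g \<subseteq> A)"

definition finitely_generated_group :: "('a, 'm) monoid_scheme \<Rightarrow> bool" where
  "finitely_generated_group G \<longleftrightarrow>
     (\<exists>S. finite S \<and> S \<subseteq> carrier G \<and> generate G S = carrier G)"

text \<open>The factor groups range over all groups whose
  elements live in the types 'b and 'c; these types are passed as explicit
  parameters, and in the main theorem they are free (hence universally quantified)
  type variables, so the notion covers groups of every carrier type.\<close>
definition not_presentable_by_product ::
    "'b itself \<Rightarrow> 'c itself \<Rightarrow> ('a, 'm) monoid_scheme \<Rightarrow> bool" where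
  "not_presentable_by_product (_ :: 'b itself) (_ :: 'c itself) G \<longleftrightarrow>
     infinite (carrier G) \<and>
     (\<forall>(G1 :: 'b monoid) (G2 :: 'c monoid) \<phi>.
        group G1 \<longrightarrow> group G2 \<longrightarrow> \<phi> \<in> hom (G1 \<times>\<times> G2) G \<longrightarrow>
        finite (rcosets\<^bsub>G\<^esub> (\<phi> ` carrier (G1 \<times>\<times> G2))) \<longrightarrow>
        finite ((\<lambda>x. \<phi> (x, \<one>\<^bsub>G2\<^esub>)) ` carrier G1) \<or>
        finite ((\<lambda>y. \<phi> (\<one>\<^bsub>G1\<^esub>, y)) ` carrier G2))"

end

theory Submission
  imports Defs
begin

lemma (in group) inter_infinite:
  assumes H: "subgroup H G" and A: "subgroup A G" and fin: "finite (rcosets H)"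
    and inf: "infinite A"
  shows "infinite (A \<inter> H)"
proof
  assume f: "finite (A \<inter> H)"
  have "A \<subseteq> (\<Union>c\<in>rcosets H. c \<inter> A)"
  proof
    fix a assume "a \<in> A"
    hence a: "a \<in> carrier G" using A subgroup.subset by blast
    hence "H #> a \<in> rcosets H" using H rcosetsI subgroup.subset by blast
    moreover have "a \<in> H #> a" using rcos_self[OF a H] .
    ultimately show "a \<in> (\<Union>c\<in>rcosets H. c \<inter> A)" using \<open>a \<in> A\<close> by blast
  qed
  moreover have "finite (\<Union>c\<in>rcosets H. c \<inter> A)"
  proof (rule finite_UN_I[OF fin])
    fix c assume c: "c \<in> rcosets H"
    show "finite (c \<inter> A)"
    proof (cases "c \<inter> A = {}")
      case True then show ?thesis by simp
    next
      case False
      then obtain a0 where a0: "a0 \<in> c" "a0 \<in> A" by blast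
      hence a0c: "a0 \<in> carrier G" using A subgroup.subset by blast
      obtain x where x: "x \<in> carrier G" "c = H #> x" using c unfolding RCOSETS_def by blast
      have ceq: "c = H #> a0" using repr_independence[of a0 H x] x a0 H by simp
      have "c \<inter> A \<subseteq> (\<lambda>h. h \<otimes> a0) ` (A \<inter> H)"
      proof
        fix b assume b: "b \<in> c \<inter> A"
        hence bc: "b \<in> carrier G" using A subgroup.subset by blast
        have "b \<otimes> inv a0 \<in> H" using subgroup.rcos_module_imp[OF H is_group a0c] b ceq by blast
        moreover have "b \<otimes> inv a0 \<in> A" using A b a0 by (simp add: subgroup.m_closed subgroup.m_inv_closed)
        moreover have "b = (b \<otimes> inv a0) \<otimes> a0" using bc a0c by (simp add: m_assoc)
        ultimately show "b \<in> (\<lambda>h. h \<otimes> a0) ` (A \<inter> H)" by blast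
      qed
      thus ?thesis using f finite_subset by blast
    qed
  qed
  ultimately show False using inf finite_subset by blast
qed

lemma (in group) super_finite_index:
  assumes H: "subgroup H G" and A: "subgroup A G" and HA: "H \<subseteq> A"
    and fin: "finite (rcosets H)"
  shows "finite (rcosets A)"
proof -
  have "rcosets A \<subseteq> (\<lambda>c. A #> (SOME y. y \<in> c)) ` (rcosets H)"
  proof
    fix C assume "C \<in> rcosets A"
    then obtain x where x: "x \<in> carrier G" "C = A #> x" unfolding RCOSETS_def by blast
    have "x \<in> H #> x" using rcos_self[OF x(1) H] .
    hence "(SOME y. y \<in> H #> x) \<in> H #> x" by (rule someI)
    hence "(SOME y. y \<in> H #> x) \<in> A #> x" using HA unfolding r_coset_def by blast
    hence "A #> x = A #> (SOME y. y \<in> H #> x)" using repr_independence x(1) A by blast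
    moreover have "H #> x \<in> rcosets H" using H rcosetsI subgroup.subset x(1) by blast
    ultimately show "C \<in> (\<lambda>c. A #> (SOME y. y \<in> c)) ` (rcosets H)" using x by blast
  qed
  thus ?thesis using fin finite_subset by blast
qed

theorem proposition3p2:
  fixes G :: "('a, 'm) monoid_scheme" and A :: "'a set"
  assumes "group G"
    and "finitely_generated_group G"
    and "acentral G A"
    and "infinite A"
    and "infinite (rcosets\<^bsub>G\<^esub> A)"
  shows "not_presentable_by_product TYPE('b) TYPE('c) G"
  unfolding not_presentable_by_product_def
proof (intro conjI allI impI)
  interpret G: group G by fact
  have Asub: "subgroup A G" and acA: "\<And>g. g \<in> A \<Longrightarrow> g \<noteq> \<one>\<^bsub>G\<^esub> \<Longrightarrow> centraliser G g \<subseteq> A"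
    using assms(3) unfolding acentral_def by auto
  have AG: "A \<subseteq> carrier G" using Asub subgroup.subset by blast
  show "infinite (carrier G)" using assms(4) AG finite_subset by blast
  fix G1 :: "'b monoid" and G2 :: "'c monoid" and \<phi>
  assume g1: "group G1" and g2: "group G2" and hom: "\<phi> \<in> hom (G1 \<times>\<times> G2) G"
    and fin: "finite (rcosets\<^bsub>G\<^esub> (\<phi> ` carrier (G1 \<times>\<times> G2)))"
  interpret G1: group G1 by fact
  interpret G2: group G2 by fact
  have gp: "group (G1 \<times>\<times> G2)" by (simp add: DirProd_group g1 g2)
  interpret gh: group_hom "G1 \<times>\<times> G2" G \<phi>
    using gp hom assms(1) by (simp add: group_hom_def group_hom_axioms_def)
  define H where "H = \<phi> ` carrier (G1 \<times>\<times> G2)"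
  have Hsub: "subgroup H G" unfolding H_def by (rule gh.img_is_subgroup)
  have phic: "\<And>x y. x \<in> carrier G1 \<Longrightarrow> y \<in> carrier G2 \<Longrightarrow> \<phi> (x, y) \<in> carrier G"
    using hom by (simp add: hom_def Pi_def)
  have phim: "\<And>x y x' y'. x \<in> carrier G1 \<Longrightarrow> y \<in> carrier G2 \<Longrightarrow> x' \<in> carrier G1 \<Longrightarrow> y' \<in> carrier G2
     \<Longrightarrow> \<phi> (x \<otimes>\<^bsub>G1\<^esub> x', y \<otimes>\<^bsub>G2\<^esub> y') = \<phi> (x, y) \<otimes>\<^bsub>G\<^esub> \<phi> (x', y')"
    using hom by (simp add: hom_def)
  have one: "\<phi> (\<one>\<^bsub>G1\<^esub>, \<one>\<^bsub>G2\<^esub>) = \<one>\<^bsub>G\<^esub>" using gh.hom_one by simp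
  have split: "\<And>x y. x \<in> carrier G1 \<Longrightarrow> y \<in> carrier G2 \<Longrightarrow> \<phi> (x, y) = \<phi> (x, \<one>\<^bsub>G2\<^esub>) \<otimes>\<^bsub>G\<^esub> \<phi> (\<one>\<^bsub>G1\<^esub>, y)"
  proof -
    fix x y assume xy: "x \<in> carrier G1" "y \<in> carrier G2"
    have "\<phi> (x \<otimes>\<^bsub>G1\<^esub> \<one>\<^bsub>G1\<^esub>, \<one>\<^bsub>G2\<^esub> \<otimes>\<^bsub>G2\<^esub> y) = \<phi> (x, \<one>\<^bsub>G2\<^esub>) \<otimes>\<^bsub>G\<^esub> \<phi> (\<one>\<^bsub>G1\<^esub>, y)"
      using phim[of x "\<one>\<^bsub>G2\<^esub>" "\<one>\<^bsub>G1\<^esub>" y] xy by simp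
    thus "\<phi> (x, y) = \<phi> (x, \<one>\<^bsub>G2\<^esub>) \<otimes>\<^bsub>G\<^esub> \<phi> (\<one>\<^bsub>G1\<^esub>, y)" using xy by simp
  qed
  have split2: "\<And>x y. x \<in> carrier G1 \<Longrightarrow> y \<in> carrier G2 \<Longrightarrow> \<phi> (x, y) = \<phi> (\<one>\<^bsub>G1\<^esub>, y) \<otimes>\<^bsub>G\<^esub> \<phi> (x, \<one>\<^bsub>G2\<^esub>)"
  proof -
    fix x y assume xy: "x \<in> carrier G1" "y \<in> carrier G2"
    have "\<phi> (\<one>\<^bsub>G1\<^esub> \<otimes>\<^bsub>G1\<^esub> x, y \<otimes>\<^bsub>G2\<^esub> \<one>\<^bsub>G2\<^esub>) = \<phi> (\<one>\<^bsub>G1\<^esub>, y) \<otimes>\<^bsub>G\<^esub> \<phi> (x, \<one>\<^bsub>G2\<^esub>)"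
      using phim[of "\<one>\<^bsub>G1\<^esub>" y x "\<one>\<^bsub>G2\<^esub>"] xy by simp
    thus "\<phi> (x, y) = \<phi> (\<one>\<^bsub>G1\<^esub>, y) \<otimes>\<^bsub>G\<^esub> \<phi> (x, \<one>\<^bsub>G2\<^esub>)" using xy by simp
  qed
  have comm: "\<And>x y. x \<in> carrier G1 \<Longrightarrow> y \<in> carrier G2 \<Longrightarrow>
      \<phi> (x, \<one>\<^bsub>G2\<^esub>) \<otimes>\<^bsub>G\<^esub> \<phi> (\<one>\<^bsub>G1\<^esub>, y) = \<phi> (\<one>\<^bsub>G1\<^esub>, y) \<otimes>\<^bsub>G\<^esub> \<phi> (x, \<one>\<^bsub>G2\<^esub>)"
    by (rule trans[OF sym[OF split] split2])
  have H12: "\<And>x. x \<in> carrier G1 \<Longrightarrow> \<phi> (x, \<one>\<^bsub>G2\<^esub>) \<in> A \<Longrightarrow> \<phi> (x, \<one>\<^bsub>G2\<^esub>) \<noteq> \<one>\<^bsub>G\<^esub>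
      \<Longrightarrow> (\<lambda>y. \<phi> (\<one>\<^bsub>G1\<^esub>, y)) ` carrier G2 \<subseteq> A"
  proof -
    fix x assume x: "x \<in> carrier G1" "\<phi> (x, \<one>\<^bsub>G2\<^esub>) \<in> A" "\<phi> (x, \<one>\<^bsub>G2\<^esub>) \<noteq> \<one>\<^bsub>G\<^esub>"
    have "(\<lambda>y. \<phi> (\<one>\<^bsub>G1\<^esub>, y)) ` carrier G2 \<subseteq> centraliser G (\<phi> (x, \<one>\<^bsub>G2\<^esub>))"
      unfolding centraliser_def using comm x(1) phic by auto
    thus "(\<lambda>y. \<phi> (\<one>\<^bsub>G1\<^esub>, y)) ` carrier G2 \<subseteq> A" using acA x(2,3) by blast
  qed
  have H21: "\<And>y. y \<in> carrier G2 \<Longrightarrow> \<phi> (\<one>\<^bsub>G1\<^esub>, y) \<in> A \<Longrightarrow> \<phi> (\<one>\<^bsub>G1\<^esub>, y) \<noteq> \<one>\<^bsub>G\<^esub>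
      \<Longrightarrow> (\<lambda>x. \<phi> (x, \<one>\<^bsub>G2\<^esub>)) ` carrier G1 \<subseteq> A"
  proof -
    fix y assume y: "y \<in> carrier G2" "\<phi> (\<one>\<^bsub>G1\<^esub>, y) \<in> A" "\<phi> (\<one>\<^bsub>G1\<^esub>, y) \<noteq> \<one>\<^bsub>G\<^esub>"
    have "(\<lambda>x. \<phi> (x, \<one>\<^bsub>G2\<^esub>)) ` carrier G1 \<subseteq> centraliser G (\<phi> (\<one>\<^bsub>G1\<^esub>, y))"
      unfolding centraliser_def using comm y(1) phic by auto
    thus "(\<lambda>x. \<phi> (x, \<one>\<^bsub>G2\<^esub>)) ` carrier G1 \<subseteq> A" using acA y(2,3) by blast
  qed
  show "finite ((\<lambda>x. \<phi> (x, \<one>\<^bsub>G2\<^esub>)) ` carrier G1) \<or> finite ((\<lambda>y. \<phi> (\<one>\<^bsub>G1\<^esub>, y)) ` carrier G2)"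
  proof (rule ccontr)
    assume "\<not> ?thesis"
    hence inf1: "infinite ((\<lambda>x. \<phi> (x, \<one>\<^bsub>G2\<^esub>)) ` carrier G1)"
      and inf2: "infinite ((\<lambda>y. \<phi> (\<one>\<^bsub>G1\<^esub>, y)) ` carrier G2)" by auto
    have HA_False: "H \<subseteq> A \<Longrightarrow> False"
      using G.super_finite_index[OF Hsub Asub] fin assms(5) unfolding H_def by blast
    have both: "(\<lambda>x. \<phi> (x, \<one>\<^bsub>G2\<^esub>)) ` carrier G1 \<subseteq> A \<Longrightarrow> (\<lambda>y. \<phi> (\<one>\<^bsub>G1\<^esub>, y)) ` carrier G2 \<subseteq> A \<Longrightarrow> False"
    proof -
      assume s1: "(\<lambda>x. \<phi> (x, \<one>\<^bsub>G2\<^esub>)) ` carrier G1 \<subseteq> A"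
        and s2: "(\<lambda>y. \<phi> (\<one>\<^bsub>G1\<^esub>, y)) ` carrier G2 \<subseteq> A"
      have "H \<subseteq> A"
      proof
        fix h assume "h \<in> H"
        then obtain x y where xy: "x \<in> carrier G1" "y \<in> carrier G2" "h = \<phi> (x, y)"
          unfolding H_def by auto
        have "\<phi> (x, \<one>\<^bsub>G2\<^esub>) \<in> A" "\<phi> (\<one>\<^bsub>G1\<^esub>, y) \<in> A" using xy s1 s2 by blast+
        hence "\<phi> (x, \<one>\<^bsub>G2\<^esub>) \<otimes>\<^bsub>G\<^esub> \<phi> (\<one>\<^bsub>G1\<^esub>, y) \<in> A" by (rule subgroup.m_closed[OF Asub])
        thus "h \<in> A" using split[OF xy(1,2)] xy(3) by simp
      qed
      thus False by (rule HA_False)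
    qed
    have "\<exists>x\<in>carrier G1. \<phi> (x, \<one>\<^bsub>G2\<^esub>) \<noteq> \<one>\<^bsub>G\<^esub>"
    proof (rule ccontr)
      assume "\<not> (\<exists>x\<in>carrier G1. \<phi> (x, \<one>\<^bsub>G2\<^esub>) \<noteq> \<one>\<^bsub>G\<^esub>)"
      hence "(\<lambda>x. \<phi> (x, \<one>\<^bsub>G2\<^esub>)) ` carrier G1 \<subseteq> {\<one>\<^bsub>G\<^esub>}" by blast
      from finite_subset[OF this] have "finite ((\<lambda>x. \<phi> (x, \<one>\<^bsub>G2\<^esub>)) ` carrier G1)" by simp
      with inf1 show False by blast
    qed
    then obtain x0 where x0: "x0 \<in> carrier G1" "\<phi> (x0, \<one>\<^bsub>G2\<^esub>) \<noteq> \<one>\<^bsub>G\<^esub>"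
      by blast
    have "\<exists>y\<in>carrier G2. \<phi> (\<one>\<^bsub>G1\<^esub>, y) \<noteq> \<one>\<^bsub>G\<^esub>"
    proof (rule ccontr)
      assume "\<not> (\<exists>y\<in>carrier G2. \<phi> (\<one>\<^bsub>G1\<^esub>, y) \<noteq> \<one>\<^bsub>G\<^esub>)"
      hence "(\<lambda>y. \<phi> (\<one>\<^bsub>G1\<^esub>, y)) ` carrier G2 \<subseteq> {\<one>\<^bsub>G\<^esub>}" by blast
      from finite_subset[OF this] have "finite ((\<lambda>y. \<phi> (\<one>\<^bsub>G1\<^esub>, y)) ` carrier G2)" by simp
      with inf2 show False by blast
    qed
    then obtain y0 where y0: "y0 \<in> carrier G2" "\<phi> (\<one>\<^bsub>G1\<^esub>, y0) \<noteq> \<one>\<^bsub>G\<^esub>"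
      by blast
    have no1: "\<And>x. x \<in> carrier G1 \<Longrightarrow> \<phi> (x, \<one>\<^bsub>G2\<^esub>) \<in> A \<Longrightarrow> \<phi> (x, \<one>\<^bsub>G2\<^esub>) = \<one>\<^bsub>G\<^esub>"
    proof (rule ccontr)
      fix x assume x: "x \<in> carrier G1" "\<phi> (x, \<one>\<^bsub>G2\<^esub>) \<in> A" "\<phi> (x, \<one>\<^bsub>G2\<^esub>) \<noteq> \<one>\<^bsub>G\<^esub>"
      have s2: "(\<lambda>y. \<phi> (\<one>\<^bsub>G1\<^esub>, y)) ` carrier G2 \<subseteq> A" using H12 x by blast
      hence "\<phi> (\<one>\<^bsub>G1\<^esub>, y0) \<in> A" using y0 by blast
      hence "(\<lambda>x. \<phi> (x, \<one>\<^bsub>G2\<^esub>)) ` carrier G1 \<subseteq> A" using H21 y0 by blast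
      thus False using both s2 by blast
    qed
    have no2: "\<And>y. y \<in> carrier G2 \<Longrightarrow> \<phi> (\<one>\<^bsub>G1\<^esub>, y) \<in> A \<Longrightarrow> \<phi> (\<one>\<^bsub>G1\<^esub>, y) = \<one>\<^bsub>G\<^esub>"
    proof (rule ccontr)
      fix y assume y: "y \<in> carrier G2" "\<phi> (\<one>\<^bsub>G1\<^esub>, y) \<in> A" "\<phi> (\<one>\<^bsub>G1\<^esub>, y) \<noteq> \<one>\<^bsub>G\<^esub>"
      have s1: "(\<lambda>x. \<phi> (x, \<one>\<^bsub>G2\<^esub>)) ` carrier G1 \<subseteq> A" using H21 y by blast
      hence "\<phi> (x0, \<one>\<^bsub>G2\<^esub>) \<in> A" using x0 by blast
      hence "(\<lambda>y. \<phi> (\<one>\<^bsub>G1\<^esub>, y)) ` carrier G2 \<subseteq> A" using H12 x0 by blast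
      thus False using both s1 by blast
    qed
    have "A \<inter> H \<subseteq> {\<one>\<^bsub>G\<^esub>}"
    proof
      fix a assume a: "a \<in> A \<inter> H"
      then obtain x y where xy: "x \<in> carrier G1" "y \<in> carrier G2" "a = \<phi> (x, y)"
        unfolding H_def by auto
      show "a \<in> {\<one>\<^bsub>G\<^esub>}"
      proof (rule ccontr)
        assume na: "a \<notin> {\<one>\<^bsub>G\<^esub>}"
        have c1: "\<phi> (x, \<one>\<^bsub>G2\<^esub>) \<in> centraliser G a"
          unfolding centraliser_def xy(3)
          using phim[of x "\<one>\<^bsub>G2\<^esub>" x y] phim[of x y x "\<one>\<^bsub>G2\<^esub>"] xy phic by simp
        have c2: "\<phi> (\<one>\<^bsub>G1\<^esub>, y) \<in> centraliser G a"
          unfolding centraliser_def xy(3)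
          using phim[of "\<one>\<^bsub>G1\<^esub>" y x y] phim[of x y "\<one>\<^bsub>G1\<^esub>" y] xy phic by simp
        have "\<phi> (x, \<one>\<^bsub>G2\<^esub>) \<in> A" "\<phi> (\<one>\<^bsub>G1\<^esub>, y) \<in> A" using acA a na c1 c2 by blast+
        hence "\<phi> (x, \<one>\<^bsub>G2\<^esub>) = \<one>\<^bsub>G\<^esub>" "\<phi> (\<one>\<^bsub>G1\<^esub>, y) = \<one>\<^bsub>G\<^esub>" using no1 no2 xy by blast+
        hence "a = \<one>\<^bsub>G\<^esub>" using split[OF xy(1,2)] xy(3) by simp
        thus False using na by simp
      qed
    qed
    hence "finite (A \<inter> H)" using finite_subset by blast
    moreover have "infinite (A \<inter> H)"
      using G.inter_infinite[OF Hsub Asub _ assms(4)] fin unfolding H_def by blast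
    ultimately show False by blast
  qed
qed

end
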